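(* Let $s,t,z$ be positive integers and put $\theta'=t(2s-1)$, $\tau=\theta'-ts-t$, $p=\min\{\lfloor\frac{z-1}{ts-t}\rfloor,t-1\}$ and $p'=\min\{\lfloor\frac{z-1}{\tau-z+1}\rfloor,t-1\}$. Define the coded exponent sets $$\mathbf{P}(C_A)=\{i+tj: i\in\{0,\dots,t-1\},\ j\in\{0,\dots,s-1\}\},\qquad \mathbf{P}(C_B)=\{t(s-1-k)+\theta' l: k\in\{0,\dots,s-1\},\ l\in\{0,\dots,t-1\}\}.$$ Define the secret exponent set $\mathbf{P}(S_A)$ by: - if $z>ts-t$ and $s,t\neq 1$: $\mathbf{P}(S_A)=\{ts+\theta' l+w: l\in\{0,\dots,p-1\},\ w\in\{0,\dots,t(s-1)-1\}\}\cup\{ts+\theta' p+u: u\in\{0,\dots,z-1-pt(s-1)\}\}$; - if $z\le ts-t$ or $t=1$ or $s=1$: $\mathbf{P}(S_A)=\{ts+\theta' p+u: u\in\{0,\dots,z-1\}\}$. Define the secret exponent set $\mathbf{P}(S_B)$ by: - if $z>\tau$ or $t=1$ or $s=1$: $\mathbf{P}(S_B)=\{ts+\theta'(t-1)+r: r\in\{0,\dots,z-1\}\}$; - if $\frac{\tau+1}{2}<z\le\tau$ and $s,t\neq1$: $\mathbf{P}(S_B)=\{ts+\theta' l'+d: d\in\{0,\dots,\tau-z\},\ l'\in\{0,\dots,p'-1\}\}\cup\{ts+\theta' p'+v: v\in\{0,\dots,z-1-p'(\tau-z+1)\}\}$; - if $z\le\frac{\tau+1}{2}$ and $s,t\neq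 1$: $\mathbf{P}(S_B)=\{ts+v: v\in\{0,\dots,z-1\}\}$. Then for all $i,l\in\{0,\dots,t-1\}$, the integer $i+t(s-1)+tl(2s-1)$ belongs to none of the sumsets $\mathbf{P}(S_A)+\mathbf{P}(C_B)$, $\mathbf{P}(S_A)+\mathbf{P}(S_B)$, $\mathbf{P}(S_B)+\mathbf{P}(C_A)$.
   Context: For integer sets $\mathbf{I},\mathbf{J}$, $\mathbf{I}+\mathbf{J}=\{i+j:i\in\mathbf{I},j\in\mathbf{J}\}$. These sets are the sets of exponents with nonzero coefficient of the polynomials of the PolyDot-CMPC scheme for privately computing $Y=A^TB$ for $m\times m$ matrices $A,B$ over a finite field split into $s$ row-wise and $t$ column-wise blocks: source 1 forms $F_A(x)=C_A(x)+S_A(x)$ with $C_A(x)=\sum_{i=0}^{t-1}\sum_{j=0}^{s-1}A_{i,j}x^{i+tj}$ (blocks $A_{i,j}$ of $A^T$) and $S_A(x)$ the sum of independent uniformly random matrices $\bar A$ times $x^e$ for $e\in\mathbf{P}(S_A)$; source 2 forms $F_B(x)=C_B(x)+S_B(x)$ with $C_B(x)=\sum_{k=0}^{s-1}\sum_{l=0}^{t-1}B_{k,l}x^{t(s-1-k)+\theta' l}$ and $S_B(x)$ likewise a sum of uniformly random matrices times $x^e$, $e\in\mathbf{P}(S_B)$. The exponents $i+t(s-1)+tl(2s-1)$ are those whose coefficients in $C_A(x)C_B(x)$ are the blocks $Y_{i,l}=\sum_j A_{i,j}B_{j,l}$ of $Y$; $z$ is the number of colluding workers. When $s=1$ (so $ts-t=0$)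 the paper takes $p=t-1$. *)

theory Defs
  imports Main
begin

definition setplus :: "int set \<Rightarrow> int set \<Rightarrow> int set" where
  "setplus I J = {i + j | i j. i \<in> I \<and> j \<in> J}"

definition thetap :: "int \<Rightarrow> int \<Rightarrow> int" where
  "thetap s t = t * (2 * s - 1)"

definition tau :: "int \<Rightarrow> int \<Rightarrow> int" where
  "tau s t = thetap s t - t * s - t"

text \<open>p; when s = 1 (so ts - t = 0) the paper takes p = t - 1.\<close>
definition pA :: "int \<Rightarrow> int \<Rightarrow> int \<Rightarrow> int" where
  "pA s t z = (if t * s - t = 0 then t - 1 else min ((z - 1) div (t * s - t)) (t - 1))"

definition pB :: "int \<Rightarrow> int \<Rightarrow> int \<Rightarrow> int" where
  "pB s t z = min ((z - 1) div (tau s t - z + 1)) (t - 1)"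

definition PCA :: "int \<Rightarrow> int \<Rightarrow> int set" where
  "PCA s t = {i + t * j | i j. i \<in> {0..t-1} \<and> j \<in> {0..s-1}}"

definition PCB :: "int \<Rightarrow> int \<Rightarrow> int set" where
  "PCB s t = {t * (s - 1 - k) + thetap s t * l | k l. k \<in> {0..s-1} \<and> l \<in> {0..t-1}}"

definition PSA :: "int \<Rightarrow> int \<Rightarrow> int \<Rightarrow> int set" where
  "PSA s t z = (if z > t * s - t \<and> s \<noteq> 1 \<and> t \<noteq> 1 then
      {t * s + thetap s t * l + w | l w. l \<in> {0..pA s t z - 1} \<and> w \<in> {0..t * (s - 1) - 1}}
      \<union> {t * s + thetap s t * pA s t z + u | u. u \<in> {0..z - 1 - pA s t z * t * (s - 1)}}
    else {t * s + thetap s t * pA s t z + u | u. u \<in> {0..z - 1}})"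

definition PSB :: "int \<Rightarrow> int \<Rightarrow> int \<Rightarrow> int set" where
  "PSB s t z = (if z > tau s t \<or> t = 1 \<or> s = 1 then
      {t * s + thetap s t * (t - 1) + r | r. r \<in> {0..z - 1}}
    else if tau s t + 1 < 2 * z then
      {t * s + thetap s t * l' + d | d l'. d \<in> {0..tau s t - z} \<and> l' \<in> {0..pB s t z - 1}}
      \<union> {t * s + thetap s t * pB s t z + v | v. v \<in> {0..z - 1 - pB s t z * (tau s t - z + 1)}}
    else {t * s + v | v. v \<in> {0..z - 1}})"

end

theory Submission
  imports Defs
begin

lemma key_mult:
  fixes T D k :: int
  assumes "T > 0" "D = T * k"
  shows "(D > 0 \<longrightarrow> k \<ge> 1 \<and> D \<ge> T) \<and> (D < 0 \<longrightarrow> k \<le> -1 \<and> D \<le> -T) \<and> (D = 0 \<longrightarrow> k = 0)"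
proof (intro conjI impI)
  assume "D = 0" then show "k = 0" using assms by simp
next
  assume "D > 0"
  then have "k > 0" using assms by (simp add: zero_less_mult_iff)
  then show "k \<ge> 1" by simp
  then show "D \<ge> T" using assms mult_left_mono[of 1 k T] by simp
next
  assume "D < 0"
  then have "k < 0" using assms by (simp add: mult_less_0_iff)
  then show "k \<le> -1" by simp
  then have "T * k \<le> T * (-1)" using assms mult_left_mono[of k "-1" T] by simp
  then show "D \<le> -T" using assms by simp
qed

lemma key_disj:
  fixes T D k :: int
  assumes "T > 0" "D = T * k"
  shows "(D > 0 \<and> k \<ge> 1 \<and> D \<ge> T) \<or> (D < 0 \<and> k \<le> -1 \<and> D \<le> -T) \<or> (D = 0 \<and> k = 0)"
proof -
  have K: "(D > 0 \<longrightarrow> k \<ge> 1 \<and> D \<ge> T) \<and> (D < 0 \<longrightarrow> k \<le> -1 \<and> D \<le> -T) \<and> (D = 0 \<longrightarrow> k = 0)"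
    by (rule key_mult[OF assms])
  consider "D > 0" | "D < 0" | "D = 0" by linarith
  then show ?thesis
  proof cases
    case 1 then show ?thesis using K by blast
  next
    case 2 then show ?thesis using K by blast
  next
    case 3 then show ?thesis using K by blast
  qed
qed

lemma PCB_mem:
  assumes "s \<ge> 1" "t \<ge> 1" "y \<in> PCB s t"
  shows "\<exists>m l2. y = m + thetap s t * l2 \<and> 0 \<le> m \<and> m \<le> t * s - t \<and> 0 \<le> l2 \<and> l2 \<le> t - 1"
proof -
  obtain k l2 where y: "y = t * (s - 1 - k) + thetap s t * l2" and k: "k \<in> {0..s-1}" and l2: "l2 \<in> {0..t-1}"
    using assms(3) unfolding PCB_def by blast
  have a: "0 \<le> t * (s - 1 - k)" using k assms by simp
  have "t * (s - 1 - k) \<le> t * (s - 1)" using k assms by (intro mult_left_mono) auto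
  then have b: "t * (s - 1 - k) \<le> t * s - t" by (simp add: algebra_simps)
  show ?thesis using y a b l2 by (intro exI[of _ "t * (s - 1 - k)"] exI[of _ l2]) auto
qed

lemma PCA_mem:
  assumes "s \<ge> 1" "t \<ge> 1" "y \<in> PCA s t"
  shows "0 \<le> y \<and> y \<le> t * s - 1"
proof -
  obtain i j where y: "y = i + t * j" and i: "i \<in> {0..t-1}" and j: "j \<in> {0..s-1}"
    using assms(3) unfolding PCA_def by blast
  have a: "0 \<le> t * j" using j assms by simp
  have "t * j \<le> t * (s - 1)" using j assms by (intro mult_left_mono) auto
  then have b: "t * j \<le> t * s - t" by (simp add: algebra_simps)
  show ?thesis using y a b i by auto
qed

lemma pA_facts:
  assumes "s \<ge> 1" "t \<ge> 1" "z \<ge> 1"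
  shows "0 \<le> pA s t z \<and> pA s t z \<le> t - 1 \<and>
    (pA s t z = t - 1 \<or> (t * s - t > 0 \<and> z - 1 - pA s t z * (t * s - t) < t * s - t))"
proof -
  have "t * (s - 1) \<ge> 0" using assms by simp
  then have n0: "t * s - t \<ge> 0" by (simp add: algebra_simps)
  show ?thesis
  proof (cases "t * s - t = 0")
    case True then show ?thesis using assms by (simp add: pA_def)
  next
    case False
    define n where "n = t * s - t"
    have n: "n > 0" using False n0 n_def by linarith
    have d0: "(z - 1) div n \<ge> 0" using n assms by (simp add: pos_imp_zdiv_nonneg_iff)
    have dm: "(z - 1) div n * n + (z - 1) mod n = z - 1" by simp
    have mlt: "(z - 1) mod n < n" using n by simp
    have p: "pA s t z = min ((z - 1) div n) (t - 1)" using False by (simp add: pA_def n_def)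
    show ?thesis
    proof (cases "(z - 1) div n \<le> t - 1")
      case True
      then have pe: "pA s t z = (z - 1) div n" using p by simp
      have lt: "z - 1 - pA s t z * n < n" using dm mlt unfolding pe by linarith
      have "0 \<le> pA s t z" "pA s t z \<le> t - 1" using pe True d0 by auto
      then show ?thesis using lt n unfolding n_def by blast
    next
      case False then show ?thesis using p assms by simp
    qed
  qed
qed

lemma PSA_mem:
  assumes "s \<ge> 1" "t \<ge> 1" "z \<ge> 1" "y \<in> PSA s t z"
  shows "\<exists>a w. y = t * s + thetap s t * a + w \<and> 0 \<le> a \<and> a \<le> t - 1 \<and> 0 \<le> w
     \<and> (w \<le> t * s - t - 1 \<or> a = t - 1)
     \<and> (z \<le> t * s - 2 * t \<longrightarrow> a = 0 \<and> w \<le> z - 1)"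
proof -
  have pf: "0 \<le> pA s t z \<and> pA s t z \<le> t - 1 \<and>
    (pA s t z = t - 1 \<or> (t * s - t > 0 \<and> z - 1 - pA s t z * (t * s - t) < t * s - t))"
    using pA_facts assms by blast
  have St: "t * s \<ge> t" using assms by simp
  show ?thesis
  proof (cases "z > t * s - t \<and> s \<noteq> 1 \<and> t \<noteq> 1")
    case True
    then have y: "y \<in> {t * s + thetap s t * l + w | l w. l \<in> {0..pA s t z - 1} \<and> w \<in> {0..t * (s - 1) - 1}}
      \<union> {t * s + thetap s t * pA s t z + u | u. u \<in> {0..z - 1 - pA s t z * t * (s - 1)}}"
      using assms(4) unfolding PSA_def by simp
    have e: "t * (s - 1) = t * s - t" by (simp add: algebra_simps)
    have e2: "pA s t z * t * (s - 1) = pA s t z * (t * s - t)" by (simp add: algebra_simps)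
    show ?thesis
    proof (cases "y \<in> {t * s + thetap s t * l + w | l w. l \<in> {0..pA s t z - 1} \<and> w \<in> {0..t * (s - 1) - 1}}")
      case True
      then obtain a w where "y = t * s + thetap s t * a + w" "a \<in> {0..pA s t z - 1}" "w \<in> {0..t * (s - 1) - 1}"
        by blast
      then show ?thesis using pf e \<open>z > t * s - t \<and> s \<noteq> 1 \<and> t \<noteq> 1\<close>
        by (intro exI[of _ a] exI[of _ w]) auto
    next
      case False
      then obtain u where "y = t * s + thetap s t * pA s t z + u" "u \<in> {0..z - 1 - pA s t z * t * (s - 1)}"
        using y by blast
      then show ?thesis using pf e2 \<open>z > t * s - t \<and> s \<noteq> 1 \<and> t \<noteq> 1\<close>
        by (intro exI[of _ "pA s t z"] exI[of _ u]) auto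
    qed
  next
    case False
    then obtain u where u: "y = t * s + thetap s t * pA s t z + u" "u \<in> {0..z - 1}"
      using assms(4) unfolding PSA_def by auto
    have c: "u \<le> t * s - t - 1 \<or> pA s t z = t - 1"
    proof (cases "t = 1 \<or> s = 1")
      case True
      then show ?thesis
      proof
        assume "t = 1" then show ?thesis using pf by simp
      next
        assume "s = 1" then show ?thesis by (simp add: pA_def)
      qed
    next
      case False
      then show ?thesis using \<open>\<not> (z > t * s - t \<and> s \<noteq> 1 \<and> t \<noteq> 1)\<close> u by auto
    qed
    have d: "z \<le> t * s - 2 * t \<Longrightarrow> pA s t z = 0"
    proof -
      assume z: "z \<le> t * s - 2 * t"
      then have n: "t * s - t > 0" using assms by linarith
      have "(z - 1) div (t * s - t) = 0" using z n assms by (intro div_pos_pos_trivial) auto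
      then show "pA s t z = 0" using n assms by (simp add: pA_def)
    qed
    show ?thesis using u pf c d by (intro exI[of _ "pA s t z"] exI[of _ u]) auto
  qed
qed

lemma PSB_mem:
  assumes "s \<ge> 1" "t \<ge> 1" "z \<ge> 1" "y \<in> PSB s t z"
  shows "\<exists>b d. y = t * s + thetap s t * b + d \<and> 0 \<le> b \<and> b \<le> t - 1 \<and> 0 \<le> d
     \<and> (b = t - 1 \<or> (d \<le> tau s t - z \<and> z \<le> tau s t))"
proof (cases "z > tau s t \<or> t = 1 \<or> s = 1")
  case True
  then obtain r where "y = t * s + thetap s t * (t - 1) + r" "r \<in> {0..z - 1}"
    using assms(4) unfolding PSB_def by auto
  then show ?thesis using assms by (intro exI[of _ "t - 1"] exI[of _ r]) auto
next
  case False
  note F = False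
  show ?thesis
  proof (cases "tau s t + 1 < 2 * z")
    case True
    define n where "n = tau s t - z + 1"
    have n: "n > 0" using F n_def by simp
    have pB: "pB s t z = min ((z - 1) div n) (t - 1)" by (simp add: pB_def n_def)
    have d0: "(z - 1) div n \<ge> 0" using n assms by (simp add: pos_imp_zdiv_nonneg_iff)
    have dm: "(z - 1) div n * n + (z - 1) mod n = z - 1" by simp
    have mlt: "(z - 1) mod n < n" using n by simp
    have pf: "0 \<le> pB s t z \<and> pB s t z \<le> t - 1 \<and>
       (pB s t z = t - 1 \<or> z - 1 - pB s t z * n \<le> tau s t - z)"
    proof (cases "(z - 1) div n \<le> t - 1")
      case True
      then have pe: "pB s t z = (z - 1) div n" using pB by simp
      have lt: "z - 1 - pB s t z * n < n" using dm mlt unfolding pe by linarith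
      have "0 \<le> pB s t z" "pB s t z \<le> t - 1" using pe True d0 by auto
      then show ?thesis using lt n_def by auto
    next
      case False then show ?thesis using pB assms by simp
    qed
    have y: "y \<in> {t * s + thetap s t * l' + d | d l'. d \<in> {0..tau s t - z} \<and> l' \<in> {0..pB s t z - 1}}
      \<union> {t * s + thetap s t * pB s t z + v | v. v \<in> {0..z - 1 - pB s t z * (tau s t - z + 1)}}"
      using assms(4) F True unfolding PSB_def by simp
    show ?thesis
    proof (cases "y \<in> {t * s + thetap s t * l' + d | d l'. d \<in> {0..tau s t - z} \<and> l' \<in> {0..pB s t z - 1}}")
      case True
      then obtain b d where "y = t * s + thetap s t * b + d" "d \<in> {0..tau s t - z}" "b \<in> {0..pB s t z - 1}"
        by blast
      then show ?thesis using pf F by (intro exI[of _ b] exI[of _ d]) auto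
    next
      case False
      then obtain v where "y = t * s + thetap s t * pB s t z + v" "v \<in> {0..z - 1 - pB s t z * (tau s t - z + 1)}"
        using y by blast
      then show ?thesis using pf F n_def by (intro exI[of _ "pB s t z"] exI[of _ v]) auto
    qed
  next
    case False
    then obtain v where "y = t * s + v" "v \<in> {0..z - 1}"
      using assms(4) F unfolding PSB_def by auto
    then show ?thesis using False F assms by (intro exI[of _ 0] exI[of _ v]) auto
  qed
qed

theorem theorem1:
  fixes s t z i l :: int
  assumes "s \<ge> 1" and "t \<ge> 1" and "z \<ge> 1"
    and "i \<in> {0..t-1}" and "l \<in> {0..t-1}"
  shows "i + t * (s - 1) + t * l * (2 * s - 1) \<notin> setplus (PSA s t z) (PCB s t)
       \<and> i + t * (s - 1) + t * l * (2 * s - 1) \<notin> setplus (PSA s t z) (PSB s t z)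
       \<and> i + t * (s - 1) + t * l * (2 * s - 1) \<notin> setplus (PSB s t z) (PCA s t)"
proof -
  define S where "S = t * s"
  define T where "T = thetap s t"
  have TS: "T = 2 * S - t" unfolding T_def S_def thetap_def by (simp add: algebra_simps)
  have St: "S \<ge> t" unfolding S_def using assms by simp
  have tau: "tau s t = S - 2 * t" unfolding tau_def S_def thetap_def by (simp add: algebra_simps)
  have Tp: "T > 0" using TS St assms by simp
  have x: "i + t * (s - 1) + t * l * (2 * s - 1) = i + S - t + T * l"
    unfolding S_def T_def thetap_def by (simp add: algebra_simps)
  have i: "0 \<le> i" "i \<le> t - 1" and l: "0 \<le> l" "l \<le> t - 1" using assms by auto
  have part1: "i + S - t + T * l \<notin> setplus (PSA s t z) (PCB s t)"
  proof
    assume "i + S - t + T * l \<in> setplus (PSA s t z) (PCB s t)"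
    then obtain y1 y2 where e: "i + S - t + T * l = y1 + y2" "y1 \<in> PSA s t z" "y2 \<in> PCB s t"
      unfolding setplus_def by blast
    obtain a w where A: "y1 = S + T * a + w" "0 \<le> a" "a \<le> t - 1" "0 \<le> w" "w \<le> S - t - 1 \<or> a = t - 1"
      using PSA_mem[OF assms(1-3) e(2)] unfolding S_def T_def by blast
    obtain m l2 where B: "y2 = m + T * l2" "0 \<le> m" "m \<le> S - t" "0 \<le> l2" "l2 \<le> t - 1"
      using PCB_mem[OF assms(1-2) e(3)] unfolding S_def T_def by blast
    have "w + m + t - i = T * (l - a - l2)" using e(1) A(1) B(1) by (simp add: algebra_simps)
    note K = key_disj[OF Tp this]
    then show False using A(2-5) B(2-5) i l TS by (elim disjE conjE; linarith)
  qed
  have part2: "i + S - t + T * l \<notin> setplus (PSA s t z) (PSB s t z)"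
  proof
    assume "i + S - t + T * l \<in> setplus (PSA s t z) (PSB s t z)"
    then obtain y1 y2 where e: "i + S - t + T * l = y1 + y2" "y1 \<in> PSA s t z" "y2 \<in> PSB s t z"
      unfolding setplus_def by blast
    obtain a w where A: "y1 = S + T * a + w" "0 \<le> a" "a \<le> t - 1" "0 \<le> w"
        "z \<le> S - 2 * t \<longrightarrow> a = 0 \<and> w \<le> z - 1"
      using PSA_mem[OF assms(1-3) e(2)] unfolding S_def T_def by blast
    obtain b d where B: "y2 = S + T * b + d" "0 \<le> b" "b \<le> t - 1" "0 \<le> d"
        "b = t - 1 \<or> (d \<le> S - 2 * t - z \<and> z \<le> S - 2 * t)"
      using PSB_mem[OF assms(1-3) e(3)] unfolding S_def T_def tau by blast
    have "T * (l - a - b - 1) = T * l - T * a - T * b - T" by (simp add: algebra_simps)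
    then have "t + w + d - (S - t + i) = T * (l - a - b - 1)" using e(1) A(1) B(1) TS
      by linarith
    note K = key_disj[OF Tp this]
    then show False using A(2-5) B(2-5) i l TS St assms(3) by (elim disjE conjE impE; linarith)
  qed
  have part3: "i + S - t + T * l \<notin> setplus (PSB s t z) (PCA s t)"
  proof
    assume "i + S - t + T * l \<in> setplus (PSB s t z) (PCA s t)"
    then obtain y1 y2 where e: "i + S - t + T * l = y1 + y2" "y1 \<in> PSB s t z" "y2 \<in> PCA s t"
      unfolding setplus_def by blast
    obtain b d where B: "y1 = S + T * b + d" "0 \<le> b" "b \<le> t - 1" "0 \<le> d"
        "b = t - 1 \<or> (d \<le> S - 2 * t - z \<and> z \<le> S - 2 * t)"
      using PSB_mem[OF assms(1-3) e(2)] unfolding S_def T_def tau by blast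
    have C: "0 \<le> y2" "y2 \<le> S - 1" using PCA_mem[OF assms(1-2) e(3)] unfolding S_def by auto
    have "d + y2 + t - i = T * (l - b)" using e(1) B(1) by (simp add: algebra_simps)
    note K = key_disj[OF Tp this]
    then show False using B(2-5) C i l TS assms(3) by (elim disjE conjE; linarith)
  qed
  show ?thesis unfolding x using part1 part2 part3 by blast
qed

end
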